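(* Let $H:\mathbb{R}^d\to\mathbb{R}$ be continuously differentiable and strongly convex with parameter $C>0$ (i.e. $H(y)\ge H(x)+\nabla H(x)^T(y-x)+\frac C2\|y-x\|_2^2$ for all $x,y$), with $L$-Lipschitz gradient, and with unique minimizer $x^*$ at which the Hessian $A:=\nabla^2H(x^* )$ exists. Let $\gamma_t=at^{-r}$ with $a>0$ and $1/2<r<1$. For integers $1\le s\le t$ define $$\bar\beta^t_s=\gamma_s\sum_{i=s}^{t-1}\prod_{k=s+1}^{i}(I-\gamma_kA),\qquad \phi^t_s=\bar\beta^t_s-A^{-1},$$ where the empty product $\prod_{k=s+1}^{s}(I-\gamma_kA)$ is the identity $I$. Then $$\sum_{s=1}^{t-1}\|\phi^t_s\|=O(t^r)\quad\text{as }t\to\infty.$$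
   Context: $\|\cdot\|$ is the operator norm induced by the Euclidean norm. *)

theory Defs
  imports "HOL-Analysis.Analysis" "HOL-Library.Landau_Symbols"
begin

text \<open>Ordered matrix product  prod_{k=s+1}^{i} (I - g k A) ; empty product is the identity.\<close>
definition step_prod :: "(nat \<Rightarrow> real) \<Rightarrow> real^'n^'n \<Rightarrow> nat \<Rightarrow> nat \<Rightarrow> real^'n^'n" where
  "step_prod g A s i = foldr (\<lambda>k M. M ** (mat 1 - g k *\<^sub>R A)) (rev [Suc s..<Suc i]) (mat 1)"

definition beta_bar :: "(nat \<Rightarrow> real) \<Rightarrow> real^'n^'n \<Rightarrow> nat \<Rightarrow> nat \<Rightarrow> real^'n^'n" where
  "beta_bar g A t s = g s *\<^sub>R (\<Sum>i\<in>{s..<t}. step_prod g A s i)"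

definition phi :: "(nat \<Rightarrow> real) \<Rightarrow> real^'n^'n \<Rightarrow> nat \<Rightarrow> nat \<Rightarrow> real^'n^'n" where
  "phi g A t s = beta_bar g A t s - matrix_inv A"

end

theory Submission
  imports Defs
begin


lemma A_props:
  fixes G :: "real^'n \<Rightarrow> real^'n" and A :: "real^'n^'n"
  assumes mono: "\<And>x y. (G y - G x) \<bullet> (y - x) \<ge> C * (norm (y - x))\<^sup>2"
    and lipschitz: "\<And>x y. norm (G x - G y) \<le> L * norm (x - y)"
    and hessian: "(G has_derivative (\<lambda>h. A *v h)) (at xstar)"
  shows "v \<bullet> (A *v v) \<ge> C * (norm v)\<^sup>2" "norm (A *v v) \<le> L * norm v"
proof -
  have D: "\<forall>e>0. \<exists>d>0. \<forall>y. norm(y - xstar) < d \<longrightarrow> norm (G y - G xstar - A *v (y - xstar)) \<le> e * norm (y - xstar)"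
    using hessian unfolding has_derivative_at_alt by blast
  have "v \<bullet> (A *v v) \<ge> C * (norm v)\<^sup>2 - e * (norm v)\<^sup>2 \<and> norm (A *v v) \<le> L * norm v + e * norm v" if e: "e > 0" for e
  proof (cases "v = 0")
    case True then show ?thesis by simp
  next
    case False
    then have nv: "norm v > 0" by simp
    obtain d where d: "d > 0" and dd: "\<And>y. norm(y - xstar) < d \<Longrightarrow> norm (G y - G xstar - A *v (y - xstar)) \<le> e * norm (y - xstar)"
      using D e by blast
    define h where "h = d / (2 * norm v)"
    have h: "h > 0" using d nv by (simp add: h_def)
    have hv: "norm (h *\<^sub>R v) < d" using d nv h by (simp add: h_def)
    define y where "y = xstar + h *\<^sub>R v"
    define err where "err = G y - G xstar - h *\<^sub>R (A *v v)"
    have yx: "y - xstar = h *\<^sub>R v" by (simp add: y_def)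
    have err: "norm err \<le> e * (h * norm v)"
      using dd[of y] hv h unfolding err_def yx by (simp add: matrix_vector_mult_scaleR)
    have Gy: "G y - G xstar = h *\<^sub>R (A *v v) + err" by (simp add: err_def)
    have m: "(G y - G xstar) \<bullet> (h *\<^sub>R v) \<ge> C * (h * norm v)\<^sup>2"
      using mono[where x=xstar and y=y] h unfolding yx by (simp add: power_mult_distrib)
    have "err \<bullet> v \<le> norm err * norm v"
      using Cauchy_Schwarz_ineq2[of err v] by linarith
    then have "err \<bullet> v \<le> e * h * (norm v)^2"
      using err nv by (smt (verit, ccfv_SIG) mult.assoc mult_right_mono power2_eq_square)
    moreover have "h * (h * (v \<bullet> (A *v v)) + err \<bullet> v) \<ge> h * (h * (C * (norm v)\<^sup>2))"
      using m unfolding Gy by (simp add: inner_add_left algebra_simps power2_eq_square inner_commute)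
    then have "h * (v \<bullet> (A *v v)) + err \<bullet> v \<ge> h * (C * (norm v)\<^sup>2)"
      using h by simp
    ultimately have "h * (v \<bullet> (A *v v)) \<ge> h * (C * (norm v)\<^sup>2 - e * (norm v)^2)"
      by (simp add: algebra_simps)
    then have 1: "v \<bullet> (A *v v) \<ge> C * (norm v)\<^sup>2 - e * (norm v)\<^sup>2" using h by simp
    have "norm (h *\<^sub>R (A *v v)) \<le> norm (G y - G xstar) + norm err"
      using Gy by (metis add_diff_cancel_right' norm_triangle_ineq4)
    also have "\<dots> \<le> L * (h * norm v) + e * (h * norm v)"
      using lipschitz[of y xstar] err yx h by simp
    finally have "h * norm (A *v v) \<le> h * (L * norm v + e * norm v)" using h by (simp add: algebra_simps)
    then have 2: "norm (A *v v) \<le> L * norm v + e * norm v" using h by simp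
    show ?thesis using 1 2 by simp
  qed
  then show "v \<bullet> (A *v v) \<ge> C * (norm v)\<^sup>2" "norm (A *v v) \<le> L * norm v"
  proof -
    show "v \<bullet> (A *v v) \<ge> C * (norm v)\<^sup>2"
    proof (rule field_le_epsilon)
      fix e :: real assume e: "e > 0"
      show "C * (norm v)\<^sup>2 \<le> v \<bullet> (A *v v) + e"
      proof (cases "v = 0")
        case False
        then have "(norm v)^2 > 0" by simp
        then show ?thesis using \<open>\<And>e. e > 0 \<Longrightarrow> _\<close>[of "e / (norm v)^2"] e by (simp add: field_simps)
      qed (use e in simp)
    qed
    show "norm (A *v v) \<le> L * norm v"
    proof (rule field_le_epsilon)
      fix e :: real assume e: "e > 0"
      show "norm (A *v v) \<le> L * norm v + e"
      proof (cases "v = 0")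
        case False
        then have "norm v > 0" by simp
        then show ?thesis using \<open>\<And>e. e > 0 \<Longrightarrow> _\<close>[of "e / norm v"] e by (simp add: field_simps)
      qed (use e in simp)
    qed
  qed
qed

lemma P_self: "step_prod g A s s = mat 1"
  by (simp add: step_prod_def)

lemma P_Suc: "s \<le> i \<Longrightarrow> step_prod g A s (Suc i) = step_prod g A s i ** (mat 1 - g (Suc i) *\<^sub>R A)"
  by (simp add: step_prod_def)

lemma P_bound:
  fixes A :: "real^'n^'n"
  assumes n: "\<And>k w. norm ((mat 1 - g k *\<^sub>R A) *v w) \<le> n k * norm w"
    and n0: "\<And>k. n k \<ge> 0"
    and si: "s \<le> i"
  shows "norm (step_prod g A s i *v w) \<le> (\<Prod>k\<in>{s<..i}. n k) * norm w"
  using si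
proof (induction i arbitrary: w rule: dec_induct)
  case base
  then show ?case by (simp add: P_self)
next
  case (step i)
  have "norm (step_prod g A s (Suc i) *v w) = norm (step_prod g A s i *v ((mat 1 - g (Suc i) *\<^sub>R A) *v w))"
    using step(1) by (simp add: P_Suc matrix_vector_mul_assoc)
  also have "\<dots> \<le> (\<Prod>k\<in>{s<..i}. n k) * norm ((mat 1 - g (Suc i) *\<^sub>R A) *v w)"
    by (rule step.IH)
  also have "\<dots> \<le> (\<Prod>k\<in>{s<..i}. n k) * (n (Suc i) * norm w)"
    by (intro mult_left_mono n prod_nonneg) (simp add: n0)
  also have "\<dots> = (\<Prod>k\<in>{s<..Suc i}. n k) * norm w"
  proof -
    have "{s<..Suc i} = insert (Suc i) {s<..i}" using step(1) by auto
    then show ?thesis by simp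
  qed
  finally show ?case .
qed

lemma tele:
  fixes A B :: "real^'n^'n"
  assumes AB: "\<And>v. A *v (B *v v) = v" and st: "s \<le> t"
  shows "(\<Sum>i\<in>{s..<t}. g (Suc i) *\<^sub>R (step_prod g A s i *v v)) = B *v v - step_prod g A s t *v (B *v v)"
  using st
proof (induction t rule: dec_induct)
  case base
  then show ?case by (simp add: P_self)
next
  case (step t)
  have "step_prod g A s (Suc t) *v (B *v v) = step_prod g A s t *v ((mat 1 - g (Suc t) *\<^sub>R A) *v (B *v v))"
    using step(1) by (simp add: P_Suc matrix_vector_mul_assoc matrix_mul_assoc)
  also have "(mat 1 - g (Suc t) *\<^sub>R A) *v (B *v v) = B *v v - g (Suc t) *\<^sub>R v"
    by (simp add: matrix_vector_mult_diff_rdistrib AB flip: scaleR_matrix_vector_assoc)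
  finally have "step_prod g A s (Suc t) *v (B *v v) = step_prod g A s t *v (B *v v) - g (Suc t) *\<^sub>R (step_prod g A s t *v v)"
    by (simp add: matrix_vector_mult_diff_distrib matrix_vector_mult_scaleR)
  then show ?case using step by simp
qed

lemma sum_mv: "(\<Sum>i\<in>I. M i) *v v = (\<Sum>i\<in>I. M i *v (v::real^'n))"
  by (induction I rule: infinite_finite_induct) (simp_all add: matrix_vector_mult_add_rdistrib)

lemma phi_vec:
  fixes A :: "real^'n^'n"
  assumes AB: "\<And>v. A *v (matrix_inv A *v v) = v" and st: "s \<le> t"
  shows "phi g A t s *v v = (\<Sum>i\<in>{s..<t}. (g s - g (Suc i)) *\<^sub>R (step_prod g A s i *v v)) - step_prod g A s t *v (matrix_inv A *v v)"
proof -
  have "phi g A t s *v v = g s *\<^sub>R (\<Sum>i\<in>{s..<t}. step_prod g A s i *v v) - matrix_inv A *v v"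
    by (simp add: phi_def beta_bar_def matrix_vector_mult_diff_rdistrib sum_mv flip: scaleR_matrix_vector_assoc)
  also have "matrix_inv A *v v = (\<Sum>i\<in>{s..<t}. g (Suc i) *\<^sub>R (step_prod g A s i *v v)) + step_prod g A s t *v (matrix_inv A *v v)"
    using tele[OF AB st, of g v] by simp
  finally show ?thesis
    by (simp add: scaleR_sum_right scaleR_diff_left sum_subtractf algebra_simps)
qed



lemma sum_powr_bound:
  fixes r :: real assumes r: "0 < r" "r < 1"
  shows "(\<Sum>s=1..N. real s powr (r - 1)) \<le> real N powr r / r"
proof (induction N)
  case 0 then show ?case by simp
next
  case (Suc N)
  have key: "real (Suc N) powr (r - 1) \<le> (real (Suc N) powr r - real N powr r) / r"
  proof (cases "N = 0")
    case True then show ?thesis using r by simp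
  next
    case False
    have "\<exists>z. real N < z \<and> z < real N + 1 \<and> ((real N + 1) powr r - real N powr r = (real N + 1 - real N) * (r * z powr (r - 1)))"
      by (rule MVT2) (use False in \<open>auto intro!: has_real_derivative_powr\<close>)
    then obtain z where z: "real N < z" "z < real N + 1" and eq: "(real N + 1) powr r - real N powr r = r * z powr (r - 1)"
      by auto
    have "real (Suc N) powr (r - 1) \<le> z powr (r - 1)"
      using z r False by (intro powr_mono2') auto
    then show ?thesis using eq r by (simp add: field_simps)
  qed
  show ?case using Suc.IH key r by (simp add: field_simps)
qed

lemma geo_deriv_bound:
  fixes \<sigma> :: real assumes "0 \<le> \<sigma>" "\<sigma> < 1"
  shows "(\<Sum>j<N. (real j + 1) * \<sigma>^j) \<le> 1 / (1 - \<sigma>)^2"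
proof -
  have eq: "(\<Sum>j<N. (real j + 1) * \<sigma>^j) * (1 - \<sigma>)^2 = 1 - (real N + 1) * \<sigma>^N + real N * \<sigma>^(N+1)"
    by (induction N) (simp_all add: algebra_simps power2_eq_square)
  have "\<sigma>^N * (real N * \<sigma> - real N - 1) \<le> 0"
    using assms mult_left_le[of \<sigma> "real N"] by (intro mult_nonneg_nonpos) auto
  then have "(\<Sum>j<N. (real j + 1) * \<sigma>^j) * (1 - \<sigma>)^2 \<le> 1"
    unfolding eq by (simp add: algebra_simps)
  then show ?thesis using assms by (simp add: field_simps)
qed

lemma inv_one_minus_exp:
  fixes x :: real assumes "x > 0"
  shows "1 / (1 - exp (- x)) \<le> 1 + 1 / x"
proof -
  have e: "exp x \<ge> 1 + x" by (rule exp_ge_add_one_self)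
  have "1 - exp (-x) = (exp x - 1) / exp x" by (simp add: exp_minus field_simps)
  moreover have ne: "exp x - 1 > 0" using e assms by linarith
  ultimately have "1 / (1 - exp (- x)) = 1 + 1 / (exp x - 1)"
    by (simp add: field_simps)
  also have "\<dots> \<le> 1 + 1 / x"
  proof -
    have xe: "x \<le> exp x - 1" using e by linarith
    have "1 / (exp x - 1) \<le> 1 / x" by (rule divide_left_mono[OF xe]) (use ne assms in auto)
    then show ?thesis by simp
  qed
  finally show ?thesis .
qed

lemma tail_bound:
  assumes s: "1 \<le> s"
  shows "(\<Sum>j<N. if s < j then 1 / (real j)^2 else 0) \<le> 1 / real s - 1 / real (max s (N - 1))"
proof (induction N)
  case 0 then show ?case by simp
next
  case (Suc N)
  show ?case
  proof (cases "s < N")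
    case True
    then have N2: "N \<ge> 2" using s by simp
    have m1: "max s (N - 1) = N - 1" and m2: "max s (Suc N - 1) = N" using True by auto
    have "1 / (real N)^2 \<le> 1 / real (N - 1) - 1 / real N"
      using N2 by (simp add: of_nat_diff field_simps power2_eq_square)
    then show ?thesis using Suc.IH True unfolding m1 m2 by simp
  next
    case False
    then have "max s (Suc N - 1) = s" "max s (N - 1) = s" by auto
    then show ?thesis using Suc.IH False by simp
  qed
qed

lemma exp_poly_bound:
  fixes b r :: real assumes b: "b > 0" and r: "r < 1"
  shows "\<exists>M. M \<ge> 0 \<and> (\<forall>j::nat. j \<ge> 1 \<longrightarrow> exp (- b * real j powr (1 - r)) \<le> M / (real j)^2)"
proof -
  define m :: nat where "m = nat \<lceil>2 / (1 - r)\<rceil> + 1"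
  have m1: "m \<ge> 1" by (simp add: m_def)
  have mr: "real m * (1 - r) \<ge> 2"
  proof -
    have "real m \<ge> 2 / (1 - r)" unfolding m_def by linarith
    then show ?thesis using r by (simp add: field_simps)
  qed
  show ?thesis
  proof (intro exI[of _ "(real m / b)^m"] conjI allI impI)
    show "(real m / b)^m \<ge> 0" using b by simp
    fix j :: nat assume j: "j \<ge> 1"
    define y where "y = b * real j powr (1 - r)"
    have y0: "y \<ge> 0" using b by (simp add: y_def)
    have "(y / real m)^m \<le> exp (y / real m)^m"
      using y0 m1 by (intro power_mono) (auto intro: order_trans[OF _ exp_ge_add_one_self])
    also have "\<dots> = exp y" using m1 by (simp flip: exp_of_nat_mult)
    finally have ey: "(y / real m)^m \<le> exp y" .
    have "real j powr 2 \<le> real j powr (real m * (1 - r))"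
      using j mr by (intro powr_mono) auto
    also have "\<dots> = (real j powr (1 - r))^m"
      using j by (simp add: powr_powr flip: powr_realpow) (simp add: mult.commute)
    finally have jj: "(real j)^2 \<le> (real j powr (1 - r))^m" using j by (simp add: powr_realpow')
    have "(b / real m)^m * (real j)^2 \<le> (b / real m)^m * (real j powr (1 - r))^m"
      using jj b by (intro mult_left_mono) auto
    also have "\<dots> = (y / real m)^m" by (simp add: y_def power_mult_distrib field_simps)
    also have "\<dots> \<le> exp y" by (rule ey)
    finally have "(b / real m)^m * (real j)^2 \<le> exp y" .
    then have "(real j)^2 \<le> exp y * (real m / b)^m"
      using b m1 by (simp add: field_simps power_divide)
    then have "exp (-y) * (real j)^2 \<le> exp (-y) * (exp y * (real m / b)^m)"
      by (intro mult_left_mono) auto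
    also have "\<dots> = (real m / b)^m" by (simp add: exp_minus field_simps)
    finally have "exp (-y) * (real j)^2 \<le> (real m / b)^m" .
    then show "exp (- b * real j powr (1 - r)) \<le> (real m / b)^m / (real j)^2"
      using j by (simp add: y_def pos_le_divide_eq)
  qed
qed


lemma gdiff:
  fixes a r :: real assumes a: "a > 0" and r: "0 < r" "r < 1" and s: "1 \<le> s" "s \<le> i"
  shows "a * real s powr (-r) - a * real (Suc i) powr (-r) \<le> a * real s powr (-r) * ((real i + 1 - real s) / (real i + 1))"
proof -
  have x0: "0 \<le> real s / real (Suc i)" and x1: "real s / real (Suc i) \<le> 1" using s by auto
  have "real s / real (Suc i) = (real s / real (Suc i)) powr 1" using s by simp
  also have "\<dots> \<le> (real s / real (Suc i)) powr r" using r x0 x1 by (intro powr_mono') auto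
  also have "\<dots> = real s powr r / real (Suc i) powr r" using s by (simp add: powr_divide)
  finally have q: "real s / real (Suc i) \<le> real s powr r / real (Suc i) powr r" .
  have "real s powr (-r) * (real s / real (Suc i)) \<le> real s powr (-r) * (real s powr r / real (Suc i) powr r)"
    by (intro mult_left_mono q) simp
  also have "\<dots> = real (Suc i) powr (-r)" using s by (simp add: powr_minus field_simps)
  finally have "real s powr (-r) * (real s / real (Suc i)) \<le> real (Suc i) powr (-r)" .
  then have "a * (real s powr (-r) * (real s / real (Suc i))) \<le> a * real (Suc i) powr (-r)"
    by (rule mult_left_mono) (use a in auto)
  moreover have "a * real s powr (-r) * ((real i + 1 - real s) / (real i + 1)) = a * real s powr (-r) - a * (real s powr (-r) * (real s / real (Suc i)))"
    by (simp add: field_simps)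
  ultimately show ?thesis by linarith
qed

lemma two_powr: fixes r :: real assumes "r < 1" shows "2 powr (-r) \<ge> 1/2"
proof -
  have "2 powr (-1::real) \<le> 2 powr (-r)" using assms by (intro powr_mono) auto
  then show ?thesis by (simp add: powr_minus)
qed

lemma pointwise:
  fixes a r c b M3 :: real
  assumes a: "a > 0" and r: "0 < r" "r < 1" and c: "c > 0" and b: "b = c * a / 2"
    and M3: "\<forall>j::nat. j \<ge> 1 \<longrightarrow> exp (- b * real j powr (1 - r)) \<le> M3 / (real j)^2"
    and s: "1 \<le> s" "s \<le> i"
  shows "(a * real s powr (-r) - a * real (Suc i) powr (-r)) * exp (- c * real (i - s) * (a * real i powr (-r)))
     \<le> a * real s powr (-r) / real s * ((real (i - s) + 1) * exp (- b * real s powr (-r)) ^ (i - s))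
       + a * real s powr (-r) * (if s < i - s then M3 / (real (i - s))^2 else 0)"
proof -
  have gd: "a * real s powr (-r) - a * real (Suc i) powr (-r) \<le> a * real s powr (-r) * ((real i + 1 - real s) / (real i + 1))"
    by (rule gdiff[OF a r s])
  have gd0: "0 \<le> a * real s powr (-r) - a * real (Suc i) powr (-r)"
    using s a r by (auto intro!: powr_mono2' mult_left_mono)
  have frac1: "(real i + 1 - real s) / (real i + 1) \<le> 1" using s by (simp add: field_simps)
  have M30: "M3 \<ge> 0" using M3[rule_format, of 1] by (auto intro: order_trans[OF exp_ge_zero])
  show ?thesis
  proof (cases "i \<le> 2 * s")
    case True
    have "real i powr (-r) \<ge> real (2 * s) powr (-r)" using True s r by (intro powr_mono2') auto
    also have "real (2 * s) powr (-r) = 2 powr (-r) * real s powr (-r)" by (simp add: powr_mult)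
    finally have "real i powr (-r) \<ge> 2 powr (-r) * real s powr (-r)" .
    moreover have "2 powr (-r) * real s powr (-r) \<ge> 1/2 * real s powr (-r)"
      using two_powr[OF r(2)] by (intro mult_right_mono) auto
    ultimately have "real i powr (-r) \<ge> 1/2 * real s powr (-r)" by linarith
    then have "a * real i powr (-r) \<ge> a * (1/2 * real s powr (-r))"
      by (rule mult_left_mono) (use a in auto)
    then have gi: "a * real i powr (-r) \<ge> a / 2 * real s powr (-r)" by simp
    have "c * real (i - s) * (a * real i powr (-r)) \<ge> c * real (i - s) * (a / 2 * real s powr (-r))"
      using gi c by (intro mult_left_mono) auto
    then have "exp (- c * real (i - s) * (a * real i powr (-r))) \<le> exp (- (real (i - s) * (b * real s powr (-r))))"
      unfolding b by (simp add: algebra_simps)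
    also have "\<dots> = exp (- b * real s powr (-r)) ^ (i - s)"
      by (simp flip: exp_of_nat_mult)
    finally have e1: "exp (- c * real (i - s) * (a * real i powr (-r))) \<le> exp (- b * real s powr (-r)) ^ (i - s)" .
    have fr: "(real i + 1 - real s) / (real i + 1) \<le> (real (i - s) + 1) / real s"
      using s by (simp add: of_nat_diff frac_le)
    have "(a * real s powr (-r) - a * real (Suc i) powr (-r)) * exp (- c * real (i - s) * (a * real i powr (-r)))
       \<le> (a * real s powr (-r) * ((real (i - s) + 1) / real s)) * exp (- b * real s powr (-r)) ^ (i - s)"
      using gd fr e1 gd0 a by (intro mult_mono order_trans[OF gd] mult_left_mono) auto
    also have "\<dots> = a * real s powr (-r) / real s * ((real (i - s) + 1) * exp (- b * real s powr (-r)) ^ (i - s))"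
      by simp
    moreover have "0 \<le> a * real s powr (-r) * (if s < i - s then M3 / (real (i - s))^2 else 0)"
      using a M30 by simp
    ultimately show ?thesis by linarith
  next
    case False
    define j where "j = i - s"
    have js: "s < j" and j1: "j \<ge> 1" and ij: "i \<le> 2 * j" using False s by (auto simp: j_def)
    have "real i powr (-r) \<ge> real (2 * j) powr (-r)" using ij s r by (intro powr_mono2') auto
    also have "real (2 * j) powr (-r) = 2 powr (-r) * real j powr (-r)" by (simp add: powr_mult)
    finally have "real i powr (-r) \<ge> 2 powr (-r) * real j powr (-r)" .
    moreover have "2 powr (-r) * real j powr (-r) \<ge> 1/2 * real j powr (-r)"
      using two_powr[OF r(2)] by (intro mult_right_mono) auto
    ultimately have "real i powr (-r) \<ge> 1/2 * real j powr (-r)" by linarith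
    then have "a * real i powr (-r) \<ge> a * (1/2 * real j powr (-r))"
      by (rule mult_left_mono) (use a in auto)
    then have gi: "a * real i powr (-r) \<ge> a / 2 * real j powr (-r)" by simp
    have jp: "real j * real j powr (-r) = real j powr (1 - r)"
      using j1 by (simp add: powr_diff powr_minus field_simps)
    have "c * real j * (a * real i powr (-r)) \<ge> c * real j * (a / 2 * real j powr (-r))"
      using gi c by (intro mult_left_mono) auto
    also have "c * real j * (a / 2 * real j powr (-r)) = b * real j powr (1 - r)"
      unfolding b jp[symmetric] by simp
    finally have "exp (- c * real j * (a * real i powr (-r))) \<le> exp (- b * real j powr (1 - r))" by simp
    also have "\<dots> \<le> M3 / (real j)^2" using M3 j1 by simp
    finally have e2: "exp (- c * real j * (a * real i powr (-r))) \<le> M3 / (real j)^2" .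
    have "a * real s powr (-r) * ((real i + 1 - real s) / (real i + 1)) \<le> a * real s powr (-r) * 1"
      by (rule mult_left_mono[OF frac1]) (use a in simp)
    then have gd2: "a * real s powr (-r) - a * real (Suc i) powr (-r) \<le> a * real s powr (-r)"
      using gd by linarith
    have "(a * real s powr (-r) - a * real (Suc i) powr (-r)) * exp (- c * real j * (a * real i powr (-r)))
      \<le> a * real s powr (-r) * (M3 / (real j)^2)"
      using gd2 e2 gd0 by (intro mult_mono) auto
    moreover have "0 \<le> a * real s powr (-r) / real s * ((real (i - s) + 1) * exp (- b * real s powr (-r)) ^ (i - s))"
      using a by simp
    ultimately show ?thesis using js unfolding j_def[symmetric] by simp
  qed
qed


lemma shift_sum: "(\<Sum>i\<in>{s..<t}. f (i - s)) = (\<Sum>j<t - s. f j)" for f :: "nat \<Rightarrow> real"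
proof (cases "s \<le> t")
  case True
  have "(\<Sum>i\<in>{0 + s..<(t - s) + s}. f (i - s)) = (\<Sum>j\<in>{0..<t - s}. f (j + s - s))"
    by (rule sum.shift_bounds_nat_ivl)
  then show ?thesis using True by (simp add: lessThan_atLeast0)
qed simp

lemma term1_bound:
  fixes a r c :: real
  assumes a: "a > 0" and r: "0 < r" "r < 1" and c: "c > 0"
  shows "\<exists>M. \<forall>t::nat. (\<Sum>s=1..t-1. \<Sum>i\<in>{s..<t}. (a * real s powr (-r) - a * real (Suc i) powr (-r)) * exp (- c * real (i - s) * (a * real i powr (-r))))
      \<le> M * real t powr r"
proof -
  define b where "b = c * a / 2"
  have b: "b > 0" using a c by (simp add: b_def)
  obtain M3 where M30: "M3 \<ge> 0" and M3: "\<forall>j::nat. j \<ge> 1 \<longrightarrow> exp (- b * real j powr (1 - r)) \<le> M3 / (real j)^2"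
    using exp_poly_bound[OF b r(2)] by blast
  define M where "M = a * ((1 + 1/b)^2 + M3) / r"
  have inner: "(\<Sum>i\<in>{s..<t}. (a * real s powr (-r) - a * real (Suc i) powr (-r)) * exp (- c * real (i - s) * (a * real i powr (-r))))
      \<le> a * ((1 + 1/b)^2 + M3) * real s powr (r - 1)" if s: "1 \<le> s" for s t
  proof -
    define \<sigma> where "\<sigma> = exp (- b * real s powr (-r))"
    have sp: "real s powr (-r) > 0" using s by simp
    have \<sigma>0: "0 \<le> \<sigma>" and \<sigma>1: "\<sigma> < 1" using b sp by (auto simp: \<sigma>_def)
    have "(\<Sum>i\<in>{s..<t}. (a * real s powr (-r) - a * real (Suc i) powr (-r)) * exp (- c * real (i - s) * (a * real i powr (-r))))
      \<le> (\<Sum>i\<in>{s..<t}. a * real s powr (-r) / real s * ((real (i - s) + 1) * \<sigma> ^ (i - s))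
       + a * real s powr (-r) * (if s < i - s then M3 / (real (i - s))^2 else 0))"
      unfolding \<sigma>_def by (intro sum_mono pointwise[OF a r c b_def M3]) (use s in auto)
    also have "\<dots> = a * real s powr (-r) / real s * (\<Sum>j<t - s. (real j + 1) * \<sigma> ^ j)
       + a * real s powr (-r) * M3 * (\<Sum>j<t - s. if s < j then 1 / (real j)^2 else 0)"
    proof -
      have e1: "(\<Sum>i\<in>{s..<t}. (real (i - s) + 1) * \<sigma> ^ (i - s)) = (\<Sum>j<t - s. (real j + 1) * \<sigma> ^ j)"
        by (rule shift_sum[where f = "\<lambda>j. (real j + 1) * \<sigma> ^ j"])
      have e2: "(\<Sum>i\<in>{s..<t}. (if s < i - s then 1 / (real (i - s))^2 else 0)) = (\<Sum>j<t - s. if s < j then 1 / (real j)^2 else 0)"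
        by (rule shift_sum[where f = "\<lambda>j. if s < j then 1 / (real j)^2 else 0"])
      have e3: "(\<Sum>i\<in>{s..<t}. a * real s powr (-r) * (if s < i - s then M3 / (real (i - s))^2 else 0))
          = a * real s powr (-r) * M3 * (\<Sum>i\<in>{s..<t}. (if s < i - s then 1 / (real (i - s))^2 else 0))"
        by (simp add: sum_distrib_left if_distrib cong: if_cong)
      have e4: "(\<Sum>i\<in>{s..<t}. a * real s powr (-r) / real s * ((real (i - s) + 1) * \<sigma> ^ (i - s)))
          = a * real s powr (-r) / real s * (\<Sum>j<t - s. (real j + 1) * \<sigma> ^ j)"
        unfolding sum_distrib_left[symmetric] e1 ..
      show ?thesis
        unfolding sum.distrib e4 e3 e2 ..
    qed
    also have "\<dots> \<le> a * real s powr (-r) / real s * ((1 + 1/b)^2 * real s powr (2 * r)) + a * real s powr (-r) * M3 * (1 / real s)"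
    proof (intro add_mono mult_left_mono)
      have "(\<Sum>j<t - s. (real j + 1) * \<sigma> ^ j) \<le> 1 / (1 - \<sigma>)^2" by (rule geo_deriv_bound[OF \<sigma>0 \<sigma>1])
      also have "\<dots> = (1 / (1 - \<sigma>))^2" by (simp add: power_divide)
      also have "\<dots> \<le> ((1 + 1/b) * real s powr r)^2"
      proof (rule power_mono)
        have "1 / (1 - \<sigma>) \<le> 1 + 1 / (b * real s powr (-r))"
          using inv_one_minus_exp[of "b * real s powr (-r)"] b sp by (simp add: \<sigma>_def)
        also have "1 + 1 / (b * real s powr (-r)) = 1 + real s powr r / b"
          using s by (simp add: powr_minus field_simps)
        also have "\<dots> \<le> (1 + 1/b) * real s powr r"
        proof -
          have "1 \<le> real s powr r" using s r by (simp add: ge_one_powr_ge_zero)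
          then show ?thesis using b by (simp add: field_simps)
        qed
        finally show "1 / (1 - \<sigma>) \<le> (1 + 1/b) * real s powr r" .
        show "0 \<le> 1 / (1 - \<sigma>)" using \<sigma>1 by simp
      qed
      also have "\<dots> = (1 + 1/b)^2 * real s powr (2 * r)"
        using s by (simp add: power_mult_distrib powr_realpow[symmetric] powr_powr mult.commute)
      finally show "(\<Sum>j<t - s. (real j + 1) * \<sigma> ^ j) \<le> (1 + 1/b)^2 * real s powr (2 * r)" .
      have "(\<Sum>j<t - s. if s < j then 1 / (real j)^2 else 0) \<le> 1 / real s - 1 / real (max s (t - s - 1))"
        by (rule tail_bound[OF s])
      also have "\<dots> \<le> 1 / real s" by simp
      finally show "(\<Sum>j<t - s. if s < j then 1 / (real j)^2 else 0) \<le> 1 / real s" .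
    qed (use a M30 in auto)
    also have "\<dots> = a * (1 + 1/b)^2 * real s powr (r - 1) + a * M3 * (real s powr (-r) / real s)"
    proof -
      have h: "real s powr (r - 1) = real s powr (-r) / real s * real s powr (2 * r)"
        using s by (simp add: powr_diff powr_minus powr_mult_base field_simps flip: powr_add) 
      show ?thesis unfolding h by (simp add: field_simps)
    qed
    also have "\<dots> \<le> a * (1 + 1/b)^2 * real s powr (r - 1) + a * M3 * real s powr (r - 1)"
    proof -
      have "real s powr (-r) / real s = real s powr (-r - 1)" using s by (simp add: powr_diff)
      also have "\<dots> \<le> real s powr (r - 1)" using s r by (intro powr_mono) auto
      finally show ?thesis using a M30 by (intro add_left_mono mult_left_mono) auto
    qed
    finally show ?thesis by (simp add: algebra_simps)
  qed
  show ?thesis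
  proof (intro exI[of _ M] allI)
    fix t :: nat
    have "(\<Sum>s=1..t-1. \<Sum>i\<in>{s..<t}. (a * real s powr (-r) - a * real (Suc i) powr (-r)) * exp (- c * real (i - s) * (a * real i powr (-r))))
      \<le> (\<Sum>s=1..t-1. a * ((1 + 1/b)^2 + M3) * real s powr (r - 1))"
      by (intro sum_mono inner) auto
    also have "\<dots> \<le> (\<Sum>s=1..t. a * ((1 + 1/b)^2 + M3) * real s powr (r - 1))"
      using a M30 by (intro sum_mono2) auto
    also have "\<dots> = a * ((1 + 1/b)^2 + M3) * (\<Sum>s=1..t. real s powr (r - 1))"
      by (simp add: sum_distrib_left)
    also have "\<dots> \<le> a * ((1 + 1/b)^2 + M3) * (real t powr r / r)"
      using a M30 by (intro mult_left_mono sum_powr_bound r) auto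
    also have "\<dots> = M * real t powr r" by (simp add: M_def)
    finally show "(\<Sum>s=1..t-1. \<Sum>i\<in>{s..<t}. (a * real s powr (-r) - a * real (Suc i) powr (-r)) * exp (- c * real (i - s) * (a * real i powr (-r))))
      \<le> M * real t powr r" .
  qed
qed


lemma term2_bound:
  fixes a r c :: real
  assumes a: "a > 0" and r: "0 < r" and c: "c > 0" and t: "t \<ge> 1"
  shows "(\<Sum>s=1..t-1. exp (- c * real (t - s) * (a * real t powr (-r)))) \<le> (1 + 1/(c*a)) * real t powr r"
proof -
  define x where "x = c * (a * real t powr (-r))"
  have x: "x > 0" using a c t by (simp add: x_def)
  define \<rho> where "\<rho> = exp (- x)"
  have \<rho>0: "0 \<le> \<rho>" and \<rho>1: "\<rho> < 1" using x by (auto simp: \<rho>_def)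
  have "(\<Sum>s=1..t-1. exp (- c * real (t - s) * (a * real t powr (-r)))) = (\<Sum>s=1..t-1. \<rho> ^ (t - s))"
    by (intro sum.cong refl) (simp add: \<rho>_def x_def flip: exp_of_nat_mult)
  also have "\<dots> = (\<Sum>m\<in>(\<lambda>s. t - s) ` {1..t-1}. \<rho> ^ m)"
    by (subst sum.reindex) (auto simp: inj_on_def)
  also have "\<dots> \<le> (\<Sum>m<t. \<rho> ^ m)"
    using \<rho>0 by (intro sum_mono2) auto
  also have "\<dots> = (1 - \<rho> ^ t) / (1 - \<rho>)" using \<rho>1 by (simp add: sum_gp_strict)
  also have "\<dots> \<le> 1 / (1 - \<rho>)" using \<rho>0 \<rho>1 by (intro divide_right_mono) auto
  also have "\<dots> \<le> 1 + 1 / x" unfolding \<rho>_def by (rule inv_one_minus_exp[OF x])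
  also have "1 / x = real t powr r / (c * a)" using t by (simp add: x_def powr_minus field_simps)
  also have "1 + real t powr r / (c * a) \<le> (1 + 1/(c*a)) * real t powr r"
  proof -
    have "1 \<le> real t powr r" using t r by (simp add: ge_one_powr_ge_zero)
    then show ?thesis using a c by (simp add: field_simps)
  qed
  finally show ?thesis by simp
qed


lemma CL_le1:
  fixes C L :: real assumes C: "C > 0" and CL: "C \<le> L"
  shows "(C / L^2) * C \<le> 1"
proof -
  have L: "L > 0" using C CL by simp
  have "C * C \<le> L * L" using C CL by (intro mult_mono) auto
  moreover have "(C / L^2) * C = (C * C) / (L * L)" by (simp add: power2_eq_square)
  ultimately show ?thesis using L by (simp add: divide_le_eq power2_eq_square)
qed

lemma step_norm:
  fixes A :: "real^'n^'n"
  assumes pos: "\<And>v. v \<bullet> (A *v v) \<ge> C * (norm v)\<^sup>2" and bnd: "\<And>v. norm (A *v v) \<le> L * norm v"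
    and C: "C > 0" and CL: "C \<le> L" and \<gamma>: "0 \<le> \<gamma>"
  shows "norm ((mat 1 - \<gamma> *\<^sub>R A) *v w) \<le> (if \<gamma> \<le> C / L^2 then 1 - C / 2 * \<gamma> else 1 + \<gamma> * L) * norm w"
proof -
  have L: "L > 0" using C CL by simp
  have eq: "(mat 1 - \<gamma> *\<^sub>R A) *v w = w - \<gamma> *\<^sub>R (A *v w)"
    by (simp add: matrix_vector_mult_diff_rdistrib flip: scaleR_matrix_vector_assoc)
  show ?thesis
  proof (cases "\<gamma> \<le> C / L^2")
    case True
    have gL: "\<gamma> * L^2 \<le> C" using True L by (simp add: field_simps)
    have gC: "\<gamma> * C \<le> 1"
    proof -
      have "\<gamma> * C \<le> (C / L^2) * C" using True C by (intro mult_right_mono) auto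
      also have "\<dots> \<le> 1" by (rule CL_le1[OF C CL])
      finally show ?thesis .
    qed
    define u where "u = A *v w"
    have sq: "(norm (w - \<gamma> *\<^sub>R u))^2 = (norm w)^2 - 2 * \<gamma> * (w \<bullet> u) + \<gamma>^2 * (norm u)^2"
      unfolding power2_norm_eq_inner by (simp add: inner_diff_left inner_diff_right inner_commute algebra_simps power2_eq_square)
    have f1: "\<gamma> * C * (norm w)^2 \<le> \<gamma> * (w \<bullet> u)"
      using mult_left_mono[OF pos[of w] \<gamma>] unfolding u_def by (simp add: mult.assoc)
    have "\<gamma>^2 * (norm u)^2 \<le> \<gamma>^2 * (L * norm w)^2"
      using bnd[of w] by (intro mult_left_mono power_mono) (auto simp: u_def)
    moreover have "\<gamma>^2 * (L * norm w)^2 = \<gamma> * (\<gamma> * L^2) * (norm w)^2" by (simp add: power2_eq_square algebra_simps)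
    moreover have "\<gamma> * (\<gamma> * L^2) * (norm w)^2 \<le> \<gamma> * C * (norm w)^2"
      using gL \<gamma> by (intro mult_right_mono mult_left_mono) auto
    ultimately have f2: "\<gamma>^2 * (norm u)^2 \<le> \<gamma> * C * (norm w)^2" by linarith
    have f3: "(1 - \<gamma> * C) * (norm w)^2 = (norm w)^2 - \<gamma> * C * (norm w)^2" by (simp add: algebra_simps)
    have f4: "2 * \<gamma> * (w \<bullet> u) = 2 * (\<gamma> * (w \<bullet> u))" by simp
    have "(norm (w - \<gamma> *\<^sub>R u))^2 \<le> (1 - \<gamma> * C) * (norm w)^2"
      unfolding sq f3 f4 using f1 f2 by linarith
    also have "\<dots> \<le> ((1 - C / 2 * \<gamma>) * norm w)^2"
    proof -
      have "(1 - C / 2 * \<gamma>)^2 = 1 - \<gamma> * C + (C * \<gamma>)^2 / 4" by (simp add: power2_eq_square field_simps)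
      moreover have "0 \<le> (C * \<gamma>)^2" by simp
      ultimately have "1 - \<gamma> * C \<le> (1 - C / 2 * \<gamma>)^2" by linarith
      then have "(1 - \<gamma> * C) * (norm w)^2 \<le> (1 - C / 2 * \<gamma>)^2 * (norm w)^2"
        by (rule mult_right_mono) simp
      then show ?thesis by (simp only: power_mult_distrib)
    qed
    finally have sq2: "(norm (w - \<gamma> *\<^sub>R u))^2 \<le> ((1 - C / 2 * \<gamma>) * norm w)^2" .
    have "C / 2 * \<gamma> = (\<gamma> * C) / 2" by simp
    then have "0 \<le> 1 - C / 2 * \<gamma>" using gC by linarith
    then have "0 \<le> (1 - C / 2 * \<gamma>) * norm w" by simp
    then have "norm (w - \<gamma> *\<^sub>R u) \<le> (1 - C / 2 * \<gamma>) * norm w"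
      using sq2 by (rule power2_le_imp_le[rotated])
    then show ?thesis using True eq unfolding u_def by simp
  next
    case False
    have "norm (w - \<gamma> *\<^sub>R (A *v w)) \<le> norm w + \<gamma> * (L * norm w)"
      using norm_triangle_ineq4[of w "\<gamma> *\<^sub>R (A *v w)"] bnd[of w] \<gamma> mult_left_mono[of "norm (A *v w)" "L * norm w" \<gamma>]
      by simp
    then show ?thesis using False eq by (simp add: algebra_simps)
  qed
qed

lemma prod_F_bound:
  fixes F :: "nat \<Rightarrow> real"
  assumes "\<And>k. k \<ge> k0 \<Longrightarrow> F k = 1" "\<And>k. 0 \<le> F k" "\<And>k. F k \<le> E" "1 \<le> E" "finite S"
  shows "(\<Prod>k\<in>S. F k) \<le> E ^ k0"
proof -
  have "(\<Prod>k\<in>S. F k) = (\<Prod>k\<in>S \<inter> {..<k0}. F k) * (\<Prod>k\<in>S - {..<k0}. F k)"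
    using assms(5) by (metis Int_Diff_Un Int_Diff_disjoint finite_Int finite_Diff prod.union_disjoint)
  also have "(\<Prod>k\<in>S - {..<k0}. F k) = 1" using assms(1) by (intro prod.neutral) auto
  also have "(\<Prod>k\<in>S \<inter> {..<k0}. F k) \<le> (\<Prod>k\<in>S \<inter> {..<k0}. E)"
    using assms by (intro prod_mono) auto
  also have "\<dots> = E ^ card (S \<inter> {..<k0})" by simp
  also have "\<dots> \<le> E ^ k0"
    using assms(4) by (intro power_increasing) (auto intro: order_trans[OF card_mono[of "{..<k0}"]])
  finally show ?thesis by simp
qed

lemma rearr: "(\<Sum>i\<in>I. x i * (y i * n)) + z * (n / C) = ((\<Sum>i\<in>I. x i * y i) + z / C) * (n::real)"
proof -
  have "(\<Sum>i\<in>I. x i * (y i * n)) = (\<Sum>i\<in>I. x i * y i) * n" by (simp add: sum_distrib_right mult.assoc)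
  then show ?thesis by (simp add: algebra_simps)
qed

theorem lemma2:
  fixes H :: "real^'n \<Rightarrow> real" and G :: "real^'n \<Rightarrow> real^'n"
    and C L a r :: real and xstar :: "real^'n" and A :: "real^'n^'n"
  assumes grad: "\<And>x. (H has_derivative (\<lambda>h. G x \<bullet> h)) (at x)"
    and grad_cont: "continuous_on UNIV G"
    and C_pos: "C > 0"
    and strong_convex: "\<And>x y. H y \<ge> H x + G x \<bullet> (y - x) + C / 2 * (norm (y - x))\<^sup>2"
    and lipschitz: "\<And>x y. norm (G x - G y) \<le> L * norm (x - y)"
    and minimizer: "\<And>x. H xstar \<le> H x"
    and unique_min: "\<And>x. (\<forall>y. H x \<le> H y) \<Longrightarrow> x = xstar"
    and hessian: "(G has_derivative (\<lambda>h. A *v h)) (at xstar)"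
    and a_pos: "a > 0" and r_gt: "1/2 < r" and r_lt: "r < 1"
  shows "(\<lambda>t::nat. \<Sum>s=1..t-1. onorm (\<lambda>v. phi (\<lambda>k. a * real k powr (-r)) A t s *v v))
           \<in> O(\<lambda>t. real t powr r)"
proof -
  have r0: "0 < r" using r_gt by simp
  have mono: "(G y - G x) \<bullet> (y - x) \<ge> C * (norm (y - x))\<^sup>2" for x y
  proof -
    have 1: "H y \<ge> H x + G x \<bullet> (y - x) + C / 2 * (norm (y - x))\<^sup>2" by (rule strong_convex)
    have 2: "H x \<ge> H y + G y \<bullet> (x - y) + C / 2 * (norm (x - y))\<^sup>2" by (rule strong_convex)
    have "norm (x - y) = norm (y - x)" by (rule norm_minus_commute)
    moreover have "G y \<bullet> (x - y) = - (G y \<bullet> (y - x))" by (simp add: inner_diff_right)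
    ultimately show ?thesis using 1 2 by (simp add: inner_diff_left)
  qed
  note Ap = A_props[OF mono lipschitz hessian]
  have pos: "\<And>v. v \<bullet> (A *v v) \<ge> C * (norm v)\<^sup>2" and bnd: "\<And>v. norm (A *v v) \<le> L * norm v"
    using Ap by auto
  have CL: "C \<le> L"
  proof -
    obtain v :: "real^'n" where v: "norm v = 1" using vector_choose_size[of 1] by auto
    have "C = C * (norm v)^2" using v by simp
    also have "\<dots> \<le> v \<bullet> (A *v v)" by (rule pos)
    also have "\<dots> \<le> norm v * norm (A *v v)" by (rule Cauchy_Schwarz_ineq2[THEN abs_le_D1])
    also have "\<dots> \<le> L" using bnd[of v] v by simp
    finally show ?thesis .
  qed
  have L: "L > 0" using C_pos CL by simp
  have ker: "\<forall>x. A *v x = 0 \<longrightarrow> x = 0"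
  proof (intro allI impI)
    fix x assume "A *v x = 0"
    then have "C * (norm x)^2 \<le> 0" using pos[of x] by simp
    then show "x = 0" using C_pos by (simp add: mult_le_0_iff)
  qed
  then obtain B where BA: "B ** A = mat 1" using matrix_left_invertible_ker by blast
  then have AB: "A ** B = mat 1" using matrix_left_right_inverse by blast
  have "A ** matrix_inv A = mat 1 \<and> matrix_inv A ** A = mat 1"
    unfolding matrix_inv_def by (rule someI[of _ B]) (use AB BA in blast)
  then have AAi: "\<And>v. A *v (matrix_inv A *v v) = v"
    by (simp add: matrix_vector_mul_assoc)
  have Ainv_bnd: "norm (matrix_inv A *v v) \<le> norm v / C" for v
  proof -
    define w where "w = matrix_inv A *v v"
    have Aw: "A *v w = v" by (simp add: w_def AAi)
    have "C * (norm w)^2 \<le> norm w * norm v"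
      using pos[of w] Cauchy_Schwarz_ineq2[of w "A *v w", THEN abs_le_D1] unfolding Aw by linarith
    then have "C * norm w \<le> norm v"
      by (cases "w = 0") (auto simp: power2_eq_square)
    then show ?thesis unfolding w_def[symmetric] using C_pos by (simp add: field_simps)
  qed
  define g where "g = (\<lambda>k::nat. a * real k powr (-r))"
  define c where "c = C / 2"
  have c: "c > 0" using C_pos by (simp add: c_def)
  have g0: "g k \<ge> 0" for k using a_pos by (simp add: g_def)
  have ga: "g k \<le> a" for k
  proof (cases "k = 0")
    case False
    then have "1 \<le> real k powr r" using r0 by (intro ge_one_powr_ge_zero) auto
    then have "real k powr (-r) \<le> 1" by (simp add: powr_minus inverse_le_1_iff)
    then show ?thesis using a_pos by (simp add: g_def mult_left_le)
  qed (simp add: g_def a_pos less_imp_le)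
  have gmono: "g i \<le> g k" if "1 \<le> k" "k \<le> i" for i k
    using that r0 a_pos by (auto simp: g_def intro!: mult_left_mono powr_mono2')
  have "((\<lambda>k. g k) \<longlongrightarrow> a * 0) sequentially"
    unfolding g_def by (intro tendsto_mult tendsto_const tendsto_neg_powr filterlim_real_sequentially) (use r0 in simp)
  then have "eventually (\<lambda>k. g k < C / L^2) sequentially"
    using C_pos L by (intro order_tendstoD(2)) auto
  then obtain k0 where k0: "\<And>k. k \<ge> k0 \<Longrightarrow> g k < C / L^2" by (auto simp: eventually_sequentially)
  define n where "n = (\<lambda>k. if g k \<le> C / L^2 then 1 - C / 2 * g k else 1 + g k * L)"
  have nb: "norm ((mat 1 - g k *\<^sub>R A) *v w) \<le> n k * norm w" for k w
    unfolding n_def by (rule step_norm[OF pos bnd C_pos CL g0])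
  have gC: "g k * C \<le> 1" if "g k \<le> C / L^2" for k
  proof -
    have "g k * C \<le> (C / L^2) * C" using that C_pos by (intro mult_right_mono) auto
    also have "\<dots> \<le> 1" by (rule CL_le1[OF C_pos CL])
    finally show ?thesis .
  qed
  have n0: "n k \<ge> 0" for k using gC[of k] g0[of k] L by (auto simp: n_def algebra_simps)
  define E where "E = (1 + a * L) * exp (c * a)"
  define F where "F = (\<lambda>k. if k < k0 then E else 1)"
  have E1: "E \<ge> 1"
  proof -
    have "1 \<le> 1 + a * L" using a_pos L by simp
    moreover have "1 \<le> exp (c * a)" using c a_pos by simp
    ultimately show ?thesis unfolding E_def using mult_mono[of 1 "1 + a*L" 1 "exp (c*a)"] by simp
  qed
  have nF: "n k \<le> F k * exp (- c * g k)" for k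
  proof (cases "g k \<le> C / L^2")
    case True
    have "n k = 1 + (- c * g k)" using True by (simp add: n_def c_def)
    also have "\<dots> \<le> exp (- c * g k)" by (rule exp_ge_add_one_self)
    also have "\<dots> \<le> F k * exp (- c * g k)" using E1 by (simp add: F_def)
    finally show ?thesis .
  next
    case False
    then have kk: "k < k0" using k0[of k] by force
    have "n k = 1 + g k * L" using False by (simp add: n_def)
    also have "\<dots> \<le> 1 + a * L" using ga[of k] L by (simp add: mult_right_mono)
    also have "\<dots> = E * exp (- c * a)" by (simp add: E_def mult.assoc flip: exp_add)
    also have "\<dots> \<le> E * exp (- c * g k)" using ga[of k] c E1 by (intro mult_left_mono) auto
    finally show ?thesis using kk by (simp add: F_def)
  qed
  define K where "K = E ^ k0"
  have K0: "K \<ge> 0" using E1 by (simp add: K_def)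
  have Pd: "norm (step_prod g A s i *v w) \<le> K * exp (- c * real (i - s) * g i) * norm w"
    if si: "s \<le> i" and s1: "1 \<le> s" for s i w
  proof -
    have "norm (step_prod g A s i *v w) \<le> (\<Prod>k\<in>{s<..i}. n k) * norm w"
      by (rule P_bound[OF nb n0 si])
    also have "(\<Prod>k\<in>{s<..i}. n k) \<le> (\<Prod>k\<in>{s<..i}. F k * exp (- c * g k))"
      by (intro prod_mono) (use n0 nF in auto)
    also have "\<dots> = (\<Prod>k\<in>{s<..i}. F k) * exp (- c * (\<Sum>k\<in>{s<..i}. g k))"
      by (simp add: prod.distrib exp_sum sum_distrib_left)
    also have "\<dots> \<le> K * exp (- c * real (i - s) * g i)"
    proof (intro mult_mono)
      show "(\<Prod>k\<in>{s<..i}. F k) \<le> K" unfolding K_def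
        by (rule prod_F_bound[of k0]) (use E1 in \<open>auto simp: F_def\<close>)
      have "real (card {s<..i}) * g i \<le> (\<Sum>k\<in>{s<..i}. g k)"
        by (rule sum_bounded_below) (use s1 gmono in auto)
      then have "real (i - s) * g i \<le> (\<Sum>k\<in>{s<..i}. g k)" by simp
      then show "exp (- c * (\<Sum>k\<in>{s<..i}. g k)) \<le> exp (- c * real (i - s) * g i)"
        using c by (simp add: mult.assoc)
    qed (use K0 in auto)
    finally show ?thesis by (simp add: mult_right_mono)
  qed
  have onb: "onorm (\<lambda>v. phi g A t s *v v) \<le> (\<Sum>i\<in>{s..<t}. (g s - g (Suc i)) * (K * exp (- c * real (i - s) * g i)))
       + K * exp (- c * real (t - s) * g t) / C"
    if s1: "1 \<le> s" and st: "s \<le> t" for s t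
  proof (rule onorm_le)
    fix v
    have "norm (phi g A t s *v v) = norm ((\<Sum>i\<in>{s..<t}. (g s - g (Suc i)) *\<^sub>R (step_prod g A s i *v v)) - step_prod g A s t *v (matrix_inv A *v v))"
      by (simp add: phi_vec[OF AAi st])
    also have "\<dots> \<le> (\<Sum>i\<in>{s..<t}. norm ((g s - g (Suc i)) *\<^sub>R (step_prod g A s i *v v))) + norm (step_prod g A s t *v (matrix_inv A *v v))"
      by (intro order_trans[OF norm_triangle_ineq4] add_right_mono norm_sum)
    also have "\<dots> \<le> (\<Sum>i\<in>{s..<t}. (g s - g (Suc i)) * (K * exp (- c * real (i - s) * g i) * norm v)) + K * exp (- c * real (t - s) * g t) * (norm v / C)"
    proof (intro add_mono sum_mono)
      fix i assume i: "i \<in> {s..<t}"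
      have d: "0 \<le> g s - g (Suc i)" using gmono[of s "Suc i"] s1 i by auto
      show "norm ((g s - g (Suc i)) *\<^sub>R (step_prod g A s i *v v)) \<le> (g s - g (Suc i)) * (K * exp (- c * real (i - s) * g i) * norm v)"
        using d Pd[of s i v] s1 i by (auto intro: mult_left_mono)
    next
      show "norm (step_prod g A s t *v (matrix_inv A *v v)) \<le> K * exp (- c * real (t - s) * g t) * (norm v / C)"
        using Pd[OF st s1, of "matrix_inv A *v v"] Ainv_bnd[of v] K0
        by (meson exp_ge_zero mult_left_mono mult_nonneg_nonneg order_trans)
    qed
    also have "\<dots> = ((\<Sum>i\<in>{s..<t}. (g s - g (Suc i)) * (K * exp (- c * real (i - s) * g i))) + K * exp (- c * real (t - s) * g t) / C) * norm v"
      by (rule rearr)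
    finally show "norm (phi g A t s *v v) \<le> ((\<Sum>i\<in>{s..<t}. (g s - g (Suc i)) * (K * exp (- c * real (i - s) * g i))) + K * exp (- c * real (t - s) * g t) / C) * norm v" .
  qed
  obtain M1 where M1: "\<And>t::nat. (\<Sum>s=1..t-1. \<Sum>i\<in>{s..<t}. (a * real s powr (-r) - a * real (Suc i) powr (-r)) * exp (- c * real (i - s) * (a * real i powr (-r))))
      \<le> M1 * real t powr r"
    using term1_bound[OF a_pos r0 r_lt c] by blast
  show ?thesis
  proof (rule bigoI[where c = "K * M1 + K / C * (1 + 1/(c*a))"], rule eventually_sequentiallyI[of 1])
    fix t :: nat assume t: "t \<ge> 1"
    have "(\<Sum>s=1..t-1. onorm (\<lambda>v. phi g A t s *v v)) \<le> (\<Sum>s=1..t-1. (\<Sum>i\<in>{s..<t}. (g s - g (Suc i)) * (K * exp (- c * real (i - s) * g i)))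
       + K * exp (- c * real (t - s) * g t) / C)"
      by (intro sum_mono onb) auto
    also have "\<dots> = K * (\<Sum>s=1..t-1. \<Sum>i\<in>{s..<t}. (g s - g (Suc i)) * exp (- c * real (i - s) * g i))
       + K / C * (\<Sum>s=1..t-1. exp (- c * real (t - s) * g t))"
      by (simp add: sum.distrib sum_distrib_left algebra_simps sum_divide_distrib)
    also have "\<dots> \<le> K * (M1 * real t powr r) + K / C * ((1 + 1/(c*a)) * real t powr r)"
      using M1[of t] term2_bound[OF a_pos r0 c t] K0 C_pos
      by (intro add_mono mult_left_mono) (auto simp: g_def)
    also have "\<dots> = (K * M1 + K / C * (1 + 1/(c*a))) * real t powr r" by (simp add: algebra_simps)
    finally have "(\<Sum>s=1..t-1. onorm (\<lambda>v. phi g A t s *v v)) \<le> (K * M1 + K / C * (1 + 1/(c*a))) * real t powr r" .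
    moreover have "0 \<le> (\<Sum>s=1..t-1. onorm (\<lambda>v. phi g A t s *v v))"
      by (intro sum_nonneg onorm_pos_le matrix_vector_mul_bounded_linear)
    ultimately show "norm (\<Sum>s=1..t-1. onorm (\<lambda>v. phi (\<lambda>k. a * real k powr (-r)) A t s *v v))
        \<le> (K * M1 + K / C * (1 + 1/(c*a))) * norm (real t powr r)"
      by (simp add: g_def)
  qed
qed

end
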